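(* For $n\ge1$ let $\mathcal{A}_n(\lambda)=\det(\lambda I_n-N_n)$, where $N_n$ is the $n\times n$ matrix with $(N_n)_{j,i}=1$ if $i\ge j-1$ and $0$ otherwise, and set $\mathcal{A}_0(\lambda)=1$. Then $\mathcal{A}_1(\lambda)=\lambda-1$ and $$\mathcal{A}_n(\lambda)=\lambda\,\mathcal{A}_{n-1}(\lambda)-\lambda\,\mathcal{A}_{n-2}(\lambda)\qquad(n\ge2).$$ *)

theory Defs
  imports "Jordan_Normal_Form.Determinant"
begin

text \<open>The n x n matrix N_n with (N_n)_{j,i} = 1 if i >= j - 1 and 0 otherwise.
  JNF matrices are 0-indexed; the condition i >= j - 1 (row j, column i) is
  shift invariant, written here as j <= i + 1.\<close>
definition N_mat :: "nat \<Rightarrow> 'a :: comm_ring_1 mat" where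
  "N_mat n = mat n n (\<lambda>(j, i). if j \<le> i + 1 then 1 else 0)"

definition A_poly :: "nat \<Rightarrow> 'a :: comm_ring_1 \<Rightarrow> 'a" where
  "A_poly n lam = (if n = 0 then 1 else det (lam \<cdot>\<^sub>m 1\<^sub>m n - N_mat n))"

end

theory Submission
  imports Defs
begin

abbreviation Mx :: "'a :: comm_ring_1 \<Rightarrow> nat \<Rightarrow> 'a mat" where
  "Mx lam n \<equiv> lam \<cdot>\<^sub>m 1\<^sub>m n - N_mat n"

lemma Mx_carrier: "Mx lam n \<in> carrier_mat n n"
  unfolding N_mat_def by auto

lemma Mx_entry: "i < n \<Longrightarrow> j < n \<Longrightarrow>
  Mx lam n $$ (i,j) = (if i = j then lam else 0) - (if i \<le> j + 1 then 1 else 0)"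
  unfolding N_mat_def by auto

lemma A_det: "A_poly n lam = det (Mx lam n)"
  unfolding A_poly_def using det_dim_zero[OF Mx_carrier[of lam 0]] by auto

definition Bx :: "'a :: comm_ring_1 \<Rightarrow> nat \<Rightarrow> 'a mat" where
  "Bx lam k = mat k k (\<lambda>(i,j). if i = 0 then -1 else
      (if i = j then lam else 0) - (if i \<le> j + 1 then 1 else 0))"

lemma Bx_carrier: "Bx lam k \<in> carrier_mat k k"
  unfolding Bx_def by auto

lemma del00: "mat_delete (Mx lam (Suc k)) 0 0 = Mx lam k"
  by (rule eq_matI) (auto simp: mat_delete_def Mx_entry N_mat_def)

lemma del10: "mat_delete (Mx lam (Suc (Suc k))) 1 0 = Bx lam (Suc k)"
  by (rule eq_matI) (auto simp: mat_delete_def Mx_entry N_mat_def Bx_def)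

lemma delB: "mat_delete (Bx lam (Suc k)) 0 j = mat_delete (Mx lam (Suc k)) 0 j"
  by (rule eq_matI) (auto simp: mat_delete_def Mx_entry N_mat_def Bx_def)

lemma detB: "det (Bx lam (Suc k)) = det (Mx lam (Suc k)) - lam * det (Mx lam k)"
proof -
  have eM: "det (Mx lam (Suc k)) = (\<Sum>j<Suc k. Mx lam (Suc k) $$ (0,j) * cofactor (Mx lam (Suc k)) 0 j)"
    by (rule laplace_expansion_row[OF Mx_carrier]) auto
  have eB: "det (Bx lam (Suc k)) = (\<Sum>j<Suc k. Bx lam (Suc k) $$ (0,j) * cofactor (Mx lam (Suc k)) 0 j)"
    unfolding cofactor_def delB[symmetric]
    by (rule laplace_expansion_row[OF Bx_carrier, unfolded cofactor_def]) auto
  have "det (Mx lam (Suc k)) - det (Bx lam (Suc k)) =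
     (\<Sum>j<Suc k. (Mx lam (Suc k) $$ (0,j) - Bx lam (Suc k) $$ (0,j)) * cofactor (Mx lam (Suc k)) 0 j)"
    unfolding eM eB by (simp add: sum_subtractf algebra_simps)
  also have "\<dots> = (\<Sum>j<Suc k. (if j = 0 then lam * cofactor (Mx lam (Suc k)) 0 j else 0))"
    by (rule sum.cong) (auto simp: Mx_entry Bx_def)
  also have "\<dots> = lam * det (Mx lam k)"
    by (simp add: cofactor_def del00)
  finally show ?thesis by (simp add: algebra_simps)
qed

lemma detM: "det (Mx lam (Suc (Suc k))) = (lam - 1) * det (Mx lam (Suc k)) + det (Bx lam (Suc k))"
proof -
  have e: "det (Mx lam (Suc (Suc k))) = (\<Sum>i<Suc (Suc k). Mx lam (Suc (Suc k)) $$ (i,0) * cofactor (Mx lam (Suc (Suc k))) i 0)"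
    by (rule laplace_expansion_column[OF Mx_carrier]) auto
  also have "\<dots> = (\<Sum>i<Suc (Suc k). (if i = 0 then (lam - 1) * det (Mx lam (Suc k))
        else if i = 1 then det (Bx lam (Suc k)) else 0))"
    by (rule sum.cong) (auto simp: Mx_entry cofactor_def del00 del10[simplified])
  also have "\<dots> = (lam - 1) * det (Mx lam (Suc k)) + det (Bx lam (Suc k))"
    by (simp only: sum.lessThan_Suc_shift) simp
  finally show ?thesis .
qed

theorem lemma3:
  fixes lam :: "'a :: comm_ring_1"
  shows "A_poly 1 lam = lam - 1 \<and>
         (\<forall>n\<ge>2. A_poly n lam = lam * A_poly (n - 1) lam - lam * A_poly (n - 2) lam)"
proof
  have "det (Mx lam (Suc 0)) = lam - 1"
    using det_single[OF Mx_carrier[of lam 1]] by (simp add: Mx_entry)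
  then show "A_poly 1 lam = lam - 1" by (simp add: A_det)
  show "\<forall>n\<ge>2. A_poly n lam = lam * A_poly (n - 1) lam - lam * A_poly (n - 2) lam"
  proof (intro allI impI)
    fix n :: nat assume "n \<ge> 2"
    then obtain k where n: "n = Suc (Suc k)" by (metis add_2_eq_Suc le_Suc_ex)
    show "A_poly n lam = lam * A_poly (n - 1) lam - lam * A_poly (n - 2) lam"
      unfolding n A_det by (simp add: detM detB algebra_simps)
  qed
qed

end
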